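(* Let $A,B\subseteq\mathbb N$ satisfy condition $( * )$. Then for every infinite set $X\subseteq D_A$, every function $f:X\to D_B$, and every $n>1$, there are distinct $x,y\in X$ such that either $d_3(f(x),f(y))/d_3(x,y)>n$ or $d_3(f(x),f(y))/d_3(x,y)<1/n$.
   Context: $2^{\mathbb N}$ is the set of infinite binary sequences. For distinct $\eta,\nu\in 2^{\mathbb N}$ let $\Delta(\eta,\nu)$ be the least $m$ with $\eta(m)\ne\nu(m)$, and $d_3(\eta,\nu)=3^{-\Delta(\eta,\nu)}$ ($d_3(\eta,\eta)=0$). For infinite $A\subseteq\mathbb N$, $T_A\subseteq 2^{<\mathbb N}$ is the tree defined inductively: it contains the empty sequence, and for each $\eta\in T_A$ it contains both $\eta^\frown 0$ and $\eta^\frown 1$ if the length $|\eta|\in A$, and only $\eta^\frown 0$ if $|\eta|\notin A$. $D_A\subseteq 2^{\mathbb N}$ is the set of infinite branches of $T_A$, with metric $d_3$. Condition $( * )$ for $A,B\subseteq\mathbb N$: $|A|=|B|=\aleph_0$ and for every $n$ there is $k$ such that for all $a\in A$, $b\in B$ with $a,b>k$, either $a/b>n$ or $b/a>n$. *)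

theory Defs
  imports "HOL-Analysis.Analysis"
begin

text \<open>Infinite binary sequences are modelled as functions nat => bool (False = 0, True = 1);
finite binary sequences as lists of bool.\<close>

definition Delta :: "(nat \<Rightarrow> bool) \<Rightarrow> (nat \<Rightarrow> bool) \<Rightarrow> nat" where
  "Delta \<eta> \<nu> = (LEAST m. \<eta> m \<noteq> \<nu> m)"

definition d3 :: "(nat \<Rightarrow> bool) \<Rightarrow> (nat \<Rightarrow> bool) \<Rightarrow> real" where
  "d3 \<eta> \<nu> = (if \<eta> = \<nu> then 0 else (1/3) ^ Delta \<eta> \<nu>)"

inductive_set T :: "nat set \<Rightarrow> bool list set" for A :: "nat set" where
  T_Nil: "[] \<in> T A"
| T_zero: "\<eta> \<in> T A \<Longrightarrow> \<eta> @ [False] \<in> T A"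
| T_one: "\<eta> \<in> T A \<Longrightarrow> length \<eta> \<in> A \<Longrightarrow> \<eta> @ [True] \<in> T A"

definition D :: "nat set \<Rightarrow> (nat \<Rightarrow> bool) set" where
  "D A = {\<eta>. \<forall>k. map \<eta> [0..<k] \<in> T A}"

definition cond_star :: "nat set \<Rightarrow> nat set \<Rightarrow> bool" where
  "cond_star A B \<longleftrightarrow> infinite A \<and> infinite B \<and>
     (\<forall>n::nat. \<exists>k::nat. \<forall>a\<in>A. \<forall>b\<in>B. a > k \<and> b > k \<longrightarrow>
        real a / real b > real n \<or> real b / real a > real n)"

end

theory Submission
  imports Defs
begin

lemma Delta_props:
  assumes "x \<noteq> y"
  shows "x (Delta x y) \<noteq> y (Delta x y)" "\<And>m. m < Delta x y \<Longrightarrow> x m = y m"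
proof -
  have ex: "\<exists>m. x m \<noteq> y m" using assms by auto
  show "x (Delta x y) \<noteq> y (Delta x y)" unfolding Delta_def by (rule LeastI_ex[OF ex])
  fix m assume "m < Delta x y"
  then show "x m = y m" unfolding Delta_def using not_less_Least by blast
qed

lemma Delta_gt:
  assumes "x \<noteq> y" "\<forall>i\<le>K. x i = y i"
  shows "Delta x y > K"
proof (rule ccontr)
  assume "\<not> K < Delta x y"
  then have "Delta x y \<le> K" by simp
  with assms Delta_props(1)[OF assms(1)] show False by auto
qed

lemma T_True: "xs @ [True] \<in> T A \<Longrightarrow> length xs \<in> A"
  by (erule T.cases) auto

lemma D_mem:
  assumes "\<eta> \<in> D A" "\<eta> m"
  shows "m \<in> A"
proof -
  have "map \<eta> [0..<Suc m] \<in> T A" using assms(1) unfolding D_def by blast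
  then have "map \<eta> [0..<m] @ [True] \<in> T A" using assms(2) by simp
  from T_True[OF this] show ?thesis by simp
qed

lemma Delta_in:
  assumes "x \<in> D A" "y \<in> D A" "x \<noteq> y"
  shows "Delta x y \<in> A"
  using Delta_props(1)[OF assms(3)] D_mem[OF assms(1)] D_mem[OF assms(2)] by blast

theorem lemma4p1:
  fixes A B :: "nat set" and X :: "(nat \<Rightarrow> bool) set"
    and f :: "(nat \<Rightarrow> bool) \<Rightarrow> (nat \<Rightarrow> bool)" and n :: real
  assumes "cond_star A B"
    and "infinite X" and "X \<subseteq> D A"
    and "f ` X \<subseteq> D B"
    and "n > 1"
  shows "\<exists>x\<in>X. \<exists>y\<in>X. x \<noteq> y \<and>
           (d3 (f x) (f y) / d3 x y > n \<or> d3 (f x) (f y) / d3 x y < 1 / n)"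
proof -
  obtain k where hk: "\<forall>a\<in>A. \<forall>b\<in>B. a > k \<and> b > k \<longrightarrow>
        real a / real b > real (2::nat) \<or> real b / real a > real (2::nat)"
    using assms(1) unfolding cond_star_def by blast
  obtain N :: nat where hN: "n < 3 ^ N" using real_arch_pow[of 3 n] by auto
  define K where "K = max k N"
  define g where "g = (\<lambda>x. (map x [0..<Suc K], map (f x) [0..<Suc K]))"
  have "g ` X \<subseteq> {xs. length xs = Suc K} \<times> {xs. length xs = Suc K}"
    unfolding g_def by auto
  moreover have "finite ({xs::bool list. length xs = Suc K} \<times> {xs::bool list. length xs = Suc K})"
    using finite_lists_length_eq[of "UNIV::bool set" "Suc K"] by (intro finite_cartesian_product) auto
  ultimately have "finite (g ` X)" using finite_subset by blast
  then have "\<not> inj_on g X" using assms(2) finite_imageD by blast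
  then obtain x y where xy: "x \<in> X" "y \<in> X" "x \<noteq> y" "g x = g y"
    unfolding inj_on_def by blast
  have agx: "\<forall>i\<le>K. x i = y i"
  proof (intro allI impI)
    fix i assume "i \<le> K"
    have "map x [0..<Suc K] = map y [0..<Suc K]" using xy(4) unfolding g_def by (simp del: upt_Suc)
    then have "\<forall>z\<in>set [0..<Suc K]. x z = y z" by (simp only: map_eq_conv)
    then show "x i = y i" using \<open>i \<le> K\<close> by (simp del: upt_Suc)
  qed
  have agf: "\<forall>i\<le>K. f x i = f y i"
  proof (intro allI impI)
    fix i assume "i \<le> K"
    have "map (f x) [0..<Suc K] = map (f y) [0..<Suc K]" using xy(4) unfolding g_def by (simp del: upt_Suc)
    then have "\<forall>z\<in>set [0..<Suc K]. f x z = f y z" by (simp only: map_eq_conv)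
    then show "f x i = f y i" using \<open>i \<le> K\<close> by (simp del: upt_Suc)
  qed
  show ?thesis
  proof (cases "f x = f y")
    case True
    have "d3 (f x) (f y) / d3 x y = 0" unfolding d3_def using True by simp
    moreover have "0 < 1 / n" using assms(5) by simp
    ultimately have "d3 (f x) (f y) / d3 x y < 1 / n" by (simp only:)
    then show ?thesis using xy(1,2,3) by blast
  next
    case False
    define a where "a = Delta x y"
    define b where "b = Delta (f x) (f y)"
    have aA: "a \<in> A" unfolding a_def using Delta_in xy assms(3) by blast
    have bB: "b \<in> B" unfolding b_def using Delta_in xy assms(4) False by blast
    have aK: "a > K" unfolding a_def using Delta_gt xy(3) agx by blast
    have bK: "b > K" unfolding b_def using Delta_gt False agf by blast
    have "real a / real b > 2 \<or> real b / real a > 2"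
      using hk aA bB aK bK unfolding K_def by fastforce
    moreover have "real a > 0" "real b > 0" using aK bK by auto
    ultimately have "real a > 2 * real b \<or> real b > 2 * real a"
      by (auto simp: field_simps)
    then have ab: "a > 2 * b \<or> b > 2 * a" by linarith
    have ratio: "d3 (f x) (f y) / d3 x y = 3 ^ a / 3 ^ b"
      unfolding d3_def a_def b_def using False xy(3) by (simp add: power_one_over)
    have N3: "n < 3 ^ N" by (rule hN)
    show ?thesis
    proof (cases "a > 2 * b")
      case True
      have "N \<le> a - b" using True bK unfolding K_def by auto
      then have "(3::real) ^ N \<le> 3 ^ (a - b)" by (rule power_increasing) simp
      moreover have "(3::real) ^ a = 3 ^ (a - b) * 3 ^ b"
        using True by (simp add: power_add[symmetric])
      ultimately have "3 ^ a / 3 ^ b > n" using N3 by (simp del: power_increasing_iff)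
      then show ?thesis using ratio xy(1,2,3) by (metis)
    next
      case F: False
      then have True: "b > 2 * a" using ab by simp
      have "N \<le> b - a" using True aK unfolding K_def by auto
      then have "(3::real) ^ N \<le> 3 ^ (b - a)" by (rule power_increasing) simp
      then have nl: "n < 3 ^ (b - a)" using N3 by linarith
      have "(3::real) ^ b = 3 ^ (b - a) * 3 ^ a"
        using True by (simp add: power_add[symmetric])
      then have "(3::real) ^ a / 3 ^ b = 1 / 3 ^ (b - a)" by simp
      also have "\<dots> < 1 / n" using nl assms(5)
        by (intro divide_strict_left_mono) auto
      finally show ?thesis using ratio xy(1,2,3) by (metis)
    qed
  qed
qed

end
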